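(* Let $\mathcal S\subset\{1,\dots,N\}$ have cardinality $s$, let $\boldsymbol\rho\in\mathbb C^N$ be supported in $\mathcal S$, and let $\mathbf d=\mathcal G\boldsymbol\rho$. Set $\mathcal Y=\{\vec{\mathbf z}_j:\ j\in\mathcal S\}$. Let $r\in(0,1)$ be such that the balls $\mathcal B_r(\vec{\mathbf z}_j)$, $j\in\mathcal S$, are pairwise disjoint. Let $\boldsymbol\rho_\star$ be a minimizer of $$\min_{\mathbf x\in\mathbb C^N}\|\mathbf x\|_1\quad\text{subject to}\quad\mathcal G\mathbf x=\mathbf d.$$ Decompose $\boldsymbol\rho_\star=\boldsymbol\rho_\star^{(i)}+\boldsymbol\rho_\star^{(o)}$, where $(\boldsymbol\rho_\star^{(i)})_q=(\boldsymbol\rho_\star)_q$ if $\vec{\mathbf z}_q\in\bigcup_{j\in\mathcal S}\mathcal B_r(\vec{\mathbf z}_j)$ and $(\boldsymbol\rho_\star^{(i)})_q=0$ otherwise. Then $$\|\boldsymbol\rho_\star^{(o)}\|_1\le\frac{2\,\mathcal I(\mathcal Y)}{r}\,\|\boldsymbol\rho_\star\|_1.$$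
   Context: Let $W$ be a set (the imaging region) and $M\ge1$. For each $\vec{\mathbf y}\in W$ let $\mathbf g_{\vec{\mathbf y}}\in\mathbb C^M$ be a vector with $\|\mathbf g_{\vec{\mathbf y}}\|_2=1$. Let $\vec{\mathbf z}_1,\dots,\vec{\mathbf z}_N\in W$ be distinct (grid) points, write $\mathbf g_j=\mathbf g_{\vec{\mathbf z}_j}$, and let $\mathcal G\in\mathbb C^{M\times N}$ be the matrix with columns $\mathbf g_j$. Inner product: $\langle\mathbf u,\mathbf v\rangle=\mathbf u^H\mathbf v=\sum_i\overline{u_i}v_i$. $\|\cdot\|_1$ is the $\ell_1$ norm on $\mathbb C^N$. Semi-metric: $\mathscr D(\vec{\mathbf y},\vec{\mathbf y}')=1-|\langle\mathbf g_{\vec{\mathbf y}},\mathbf g_{\vec{\mathbf y}'}\rangle|$ for $\vec{\mathbf y},\vec{\mathbf y}'\in W$; ball $\mathcal B_r(\vec{\mathbf y})=\{\vec{\mathbf y}'\in W:\ \mathscr D(\vec{\mathbf y},\vec{\mathbf y}')<r\}$. Interaction coefficient: for a finite set $\mathcal Y\subset W$ and each $q\in\{1,\dots,N\}$, let $\mathscr N(\vec{\mathbf z}_q)\in\mathcal Y$ be a point of $\mathcal Y$ minimizing $\mathscr D(\vec{\mathbf z}_q,\cdot)$ over $\mathcal Y$ (any choice if several); then $\mathcal I(\mathcal Y)=\max_{q=1,\dots,N}\sum_{\vec{\mathbf y}\in\mathcal Y\setminus\{\mathscr N(\vec{\mathbf z}_q)\}}|\langle\mathbf g_{\vec{\mathbf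 y}},\mathbf g_q\rangle|$. *)

theory Defs
  imports Complex_Main
begin

text \<open>Vectors in C^M are represented as functions nat => complex, indexed by {..<M};
  vectors in C^N are functions nat => complex, indexed by {1..N}.\<close>

definition inprod :: "nat \<Rightarrow> (nat \<Rightarrow> complex) \<Rightarrow> (nat \<Rightarrow> complex) \<Rightarrow> complex" where
  "inprod M u v = (\<Sum>i<M. cnj (u i) * v i)"

definition norm2 :: "nat \<Rightarrow> (nat \<Rightarrow> complex) \<Rightarrow> real" where
  "norm2 M u = sqrt (\<Sum>i<M. (cmod (u i))^2)"

definition l1norm :: "nat \<Rightarrow> (nat \<Rightarrow> complex) \<Rightarrow> real" where
  "l1norm N x = (\<Sum>j\<in>{1..N}. cmod (x j))"

definition Gmat :: "nat \<Rightarrow> ('w \<Rightarrow> nat \<Rightarrow> complex) \<Rightarrow> (nat \<Rightarrow> 'w) \<Rightarrow> (nat \<Rightarrow> complex) \<Rightarrow> (nat \<Rightarrow> complex)" where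
  "Gmat N g z x = (\<lambda>i. \<Sum>j\<in>{1..N}. g (z j) i * x j)"

definition semimetric :: "nat \<Rightarrow> ('w \<Rightarrow> nat \<Rightarrow> complex) \<Rightarrow> 'w \<Rightarrow> 'w \<Rightarrow> real" where
  "semimetric M g y y' = 1 - cmod (inprod M (g y) (g y'))"

definition Dball :: "nat \<Rightarrow> ('w \<Rightarrow> nat \<Rightarrow> complex) \<Rightarrow> 'w set \<Rightarrow> real \<Rightarrow> 'w \<Rightarrow> 'w set" where
  "Dball M g W r y = {y' \<in> W. semimetric M g y y' < r}"

definition nearest_choice :: "nat \<Rightarrow> nat \<Rightarrow> ('w \<Rightarrow> nat \<Rightarrow> complex) \<Rightarrow> (nat \<Rightarrow> 'w) \<Rightarrow> 'w set \<Rightarrow> (nat \<Rightarrow> 'w) \<Rightarrow> bool" where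
  "nearest_choice M N g z Y nn \<longleftrightarrow>
     (\<forall>q\<in>{1..N}. nn q \<in> Y \<and> (\<forall>y\<in>Y. semimetric M g (z q) (nn q) \<le> semimetric M g (z q) y))"

definition interaction :: "nat \<Rightarrow> nat \<Rightarrow> ('w \<Rightarrow> nat \<Rightarrow> complex) \<Rightarrow> (nat \<Rightarrow> 'w) \<Rightarrow> 'w set \<Rightarrow> (nat \<Rightarrow> 'w) \<Rightarrow> real" where
  "interaction M N g z Y nn =
     Max ((\<lambda>q. \<Sum>y\<in>Y - {nn q}. cmod (inprod M (g y) (g (z q)))) ` {1..N})"

end

theory Submission imports Defs begin

lemma inprod_self: "norm2 M u = 1 \<Longrightarrow> inprod M u u = 1"
proof -
  assume h: "norm2 M u = 1"
  have s: "(\<Sum>i<M. (cmod (u i))^2) = 1"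
    using h unfolding norm2_def by (metis real_sqrt_eq_1_iff)
  have "inprod M u u = (\<Sum>i<M. complex_of_real ((cmod (u i))^2))"
    unfolding inprod_def by (rule sum.cong[OF refl], subst mult.commute, rule complex_norm_square[symmetric])
  also have "\<dots> = complex_of_real (\<Sum>i<M. (cmod (u i))^2)" by simp
  finally show ?thesis using s by simp
qed

lemma inprod_le1: "norm2 M u = 1 \<Longrightarrow> norm2 M v = 1 \<Longrightarrow> cmod (inprod M u v) \<le> 1"
proof -
  assume hu: "norm2 M u = 1" and hv: "norm2 M v = 1"
  have su: "(\<Sum>i<M. (cmod (u i))^2) = 1"
    using hu unfolding norm2_def by (metis real_sqrt_eq_1_iff)
  have sv: "(\<Sum>i<M. (cmod (v i))^2) = 1"
    using hv unfolding norm2_def by (metis real_sqrt_eq_1_iff)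
  have "cmod (inprod M u v) \<le> (\<Sum>i<M. cmod (cnj (u i) * v i))"
    unfolding inprod_def by (rule norm_sum)
  also have "\<dots> \<le> (\<Sum>i<M. ((cmod (u i))^2 + (cmod (v i))^2) / 2)"
  proof (rule sum_mono)
    fix i
    have "0 \<le> (cmod (u i) - cmod (v i))^2" by simp
    then show "cmod (cnj (u i) * v i) \<le> ((cmod (u i))^2 + (cmod (v i))^2) / 2"
      by (simp add: norm_mult power2_diff)
  qed
  also have "\<dots> = 1" using su sv by (simp add: sum_divide_distrib[symmetric] sum.distrib)
  finally show ?thesis .
qed

lemma inprod_Gmat: "inprod M u (Gmat N g z x) = (\<Sum>q\<in>{1..N}. x q * inprod M u (g (z q)))"
  unfolding inprod_def Gmat_def
  by (simp add: sum_distrib_left sum_distrib_right mult_ac sum.swap[of _ "{..<M}"])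

lemma cnj_sgn: "rr * cnj (sgn rr) = complex_of_real (cmod rr)"
proof (cases "rr = 0")
  case False
  have "rr * cnj (sgn rr) = rr * cnj rr / complex_of_real (cmod rr)"
    by (simp add: sgn_div_norm scaleR_conv_of_real divide_inverse mult_ac)
  also have "\<dots> = complex_of_real (cmod rr)"
    using False by (simp add: complex_norm_square[symmetric] power2_eq_square)
  finally show ?thesis .
qed simp

theorem theorem4:
  fixes M N s :: nat and W :: "'w set" and g :: "'w \<Rightarrow> nat \<Rightarrow> complex"
    and z :: "nat \<Rightarrow> 'w" and S :: "nat set" and rho rhos :: "nat \<Rightarrow> complex"
    and r :: real and nn :: "nat \<Rightarrow> 'w"
  assumes M_pos: "M \<ge> 1"
    and g_unit: "\<forall>y\<in>W. norm2 M (g y) = 1"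
    and z_in: "\<forall>j\<in>{1..N}. z j \<in> W"
    and z_distinct: "inj_on z {1..N}"
    and S_sub: "S \<subseteq> {1..N}" and S_card: "card S = s"
    and rho_supp: "\<forall>j\<in>{1..N} - S. rho j = 0"
    and r_range: "0 < r" "r < 1"
    and balls_disjoint: "\<forall>j\<in>S. \<forall>k\<in>S. j \<noteq> k \<longrightarrow> Dball M g W r (z j) \<inter> Dball M g W r (z k) = {}"
    and rhos_feas: "Gmat N g z rhos = Gmat N g z rho"
    and rhos_min: "\<forall>x. Gmat N g z x = Gmat N g z rho \<longrightarrow> l1norm N rhos \<le> l1norm N x"
    and nn_choice: "nearest_choice M N g z (z ` S) nn"
  shows "l1norm N (\<lambda>q. if z q \<in> (\<Union>j\<in>S. Dball M g W r (z j)) then 0 else rhos q)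
         \<le> 2 * interaction M N g z (z ` S) nn / r * l1norm N rhos"
proof -
  let ?Y = "z ` S"
  let ?I = "interaction M N g z ?Y nn"
  let ?ip = "\<lambda>y q. inprod M (g y) (g (z q))"
  let ?in = "\<lambda>q. z q \<in> (\<Union>j\<in>S. Dball M g W r (z j))"
  define c where "c q = (\<Sum>j\<in>S. cnj (sgn (rho j)) * ?ip (z j) q)" for q
  define T where "T x = (\<Sum>j\<in>S. cnj (sgn (rho j)) * inprod M (g (z j)) (Gmat N g z x))" for x
  have finS: "finite S" using S_sub finite_subset by blast
  have injS: "inj_on z S" using z_distinct S_sub inj_on_subset by blast
  have zW: "\<And>j. j \<in> {1..N} \<Longrightarrow> z j \<in> W" using z_in by blast
  have YW: "?Y \<subseteq> W" using S_sub zW by blast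
  have finImg: "finite ((\<lambda>q. \<Sum>y\<in>?Y - {nn q}. cmod (inprod M (g y) (g (z q)))) ` {1..N})" by simp
  have Ibound: "\<And>q. q \<in> {1..N} \<Longrightarrow> (\<Sum>y\<in>?Y - {nn q}. cmod (?ip y q)) \<le> ?I"
    unfolding interaction_def by (rule Max_ge[OF finImg]) blast
  have nnY: "\<And>q. q \<in> {1..N} \<Longrightarrow> nn q \<in> ?Y" using nn_choice unfolding nearest_choice_def by blast
  have Tlin: "T x = (\<Sum>q\<in>{1..N}. x q * c q)" for x
    unfolding T_def c_def inprod_Gmat
    by (simp add: sum_distrib_left sum.swap[of _ S] mult_ac)
  have Teq: "T rhos = T rho" unfolding T_def using rhos_feas by simp
  have cbound: "cmod (c q) \<le> cmod (?ip (nn q) q) + ?I" if q: "q \<in> {1..N}" for q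
  proof -
    have "cmod (c q) \<le> (\<Sum>j\<in>S. cmod (cnj (sgn (rho j)) * ?ip (z j) q))"
      unfolding c_def by (rule norm_sum)
    also have "\<dots> \<le> (\<Sum>j\<in>S. cmod (?ip (z j) q))"
    proof (rule sum_mono)
      fix j
      have "cmod (cnj (sgn (rho j))) \<le> 1" by (simp add: norm_sgn)
      then show "cmod (cnj (sgn (rho j)) * ?ip (z j) q) \<le> cmod (?ip (z j) q)"
        by (simp add: norm_mult mult_left_le_one_le)
    qed
    also have "\<dots> = (\<Sum>y\<in>?Y. cmod (?ip y q))"
      using sum.reindex[OF injS, of "\<lambda>y. cmod (?ip y q)"] by simp
    also have "\<dots> = cmod (?ip (nn q) q) + (\<Sum>y\<in>?Y - {nn q}. cmod (?ip y q))"
      using sum.remove[of ?Y "nn q"] nnY[OF q] finS by simp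
    also have "\<dots> \<le> cmod (?ip (nn q) q) + ?I" using Ibound[OF q] by simp
    finally show ?thesis .
  qed
  have nnbound: "cmod (?ip (nn q) q) \<le> (if ?in q then 1 else 1 - r)" if q: "q \<in> {1..N}" for q
  proof -
    have "cmod (?ip (nn q) q) \<le> 1"
      using inprod_le1 g_unit nnY[OF q] YW zW[OF q] by blast
    moreover have "cmod (?ip (nn q) q) \<le> 1 - r" if "\<not> ?in q"
    proof -
      obtain j where j: "j \<in> S" "nn q = z j" using nnY[OF q] by blast
      have "z q \<notin> Dball M g W r (z j)" using that j by blast
      then have "semimetric M g (z j) (z q) \<ge> r" unfolding Dball_def using zW[OF q] by auto
      then show ?thesis unfolding semimetric_def using j by simp
    qed
    ultimately show ?thesis by simp
  qed
  let ?A = "l1norm N rhos"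
  let ?out = "l1norm N (\<lambda>q. if ?in q then 0 else rhos q)"
  have up: "cmod (T rhos) \<le> (1 + ?I) * ?A - r * ?out"
  proof -
    have "cmod (T rhos) \<le> (\<Sum>q\<in>{1..N}. cmod (rhos q * c q))"
      unfolding Tlin by (rule norm_sum)
    also have "\<dots> \<le> (\<Sum>q\<in>{1..N}. (1 + ?I) * cmod (rhos q) - r * cmod (if ?in q then 0 else rhos q))"
    proof (rule sum_mono)
      fix q assume q: "q \<in> {1..N}"
      have "cmod (c q) \<le> (if ?in q then 1 else 1 - r) + ?I"
        using cbound[OF q] nnbound[OF q] by linarith
      then have "cmod (rhos q) * cmod (c q) \<le> cmod (rhos q) * ((if ?in q then 1 else 1 - r) + ?I)"
        by (simp add: mult_left_mono)
      then show "cmod (rhos q * c q) \<le> (1 + ?I) * cmod (rhos q) - r * cmod (if ?in q then 0 else rhos q)"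
        by (cases "?in q") (simp_all add: norm_mult algebra_simps)
    qed
    also have "\<dots> = (1 + ?I) * ?A - r * ?out"
      unfolding l1norm_def by (simp add: sum_subtractf sum_distrib_left)
    finally show ?thesis .
  qed
  have nnS: "nn k = z k" if k: "k \<in> S" for k
  proof (rule ccontr)
    assume ne: "nn k \<noteq> z k"
    have kN: "k \<in> {1..N}" using k S_sub by blast
    obtain j where j: "j \<in> S" "nn k = z j" using nnY[OF kN] by blast
    have jk: "j \<noteq> k" using ne j by auto
    have one: "\<And>y. y \<in> W \<Longrightarrow> semimetric M g y y = 0"
      unfolding semimetric_def using inprod_self g_unit by simp
    have "semimetric M g (z k) (nn k) \<le> semimetric M g (z k) (z k)"
      using nn_choice kN k unfolding nearest_choice_def by blast
    then have "semimetric M g (z k) (z j) < r" using one zW[OF kN] r_range j by simp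
    then have "z j \<in> Dball M g W r (z k)" unfolding Dball_def using zW j S_sub by blast
    moreover have "z j \<in> Dball M g W r (z j)" unfolding Dball_def using zW j S_sub one r_range by auto
    ultimately show False using balls_disjoint j k jk by blast
  qed
  let ?B = "l1norm N rho"
  have lowk: "Re (rho k * c k) \<ge> (1 - ?I) * cmod (rho k)" if k: "k \<in> S" for k
  proof -
    have kN: "k \<in> {1..N}" using k S_sub by blast
    define e where "e = (\<Sum>j\<in>S - {k}. cnj (sgn (rho j)) * ?ip (z j) k)"
    have ck: "c k = cnj (sgn (rho k)) * ?ip (z k) k + e"
      unfolding c_def e_def using sum.remove[OF finS k] by simp
    have ipkk: "?ip (z k) k = 1" using inprod_self g_unit zW[OF kN] by blast
    have "cmod e \<le> (\<Sum>j\<in>S - {k}. cmod (cnj (sgn (rho j)) * ?ip (z j) k))"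
      unfolding e_def by (rule norm_sum)
    also have "\<dots> \<le> (\<Sum>j\<in>S - {k}. cmod (?ip (z j) k))"
    proof (rule sum_mono)
      fix j
      have "cmod (cnj (sgn (rho j))) \<le> 1" by (simp add: norm_sgn)
      then show "cmod (cnj (sgn (rho j)) * ?ip (z j) k) \<le> cmod (?ip (z j) k)"
        by (simp add: norm_mult mult_left_le_one_le)
    qed
    also have "\<dots> = (\<Sum>y\<in>?Y - {nn k}. cmod (?ip y k))"
    proof -
      have inj2: "inj_on z (S - {k})" using injS inj_on_subset by blast
      have "z ` (S - {k}) = ?Y - {z k}" using injS k by (auto simp: inj_on_def)
      then show ?thesis using sum.reindex[OF inj2, of "\<lambda>y. cmod (?ip y k)"] nnS[OF k] by simp
    qed
    also have "\<dots> \<le> ?I" using Ibound[OF kN] .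
    finally have eI: "cmod e \<le> ?I" .
    have "rho k * c k = complex_of_real (cmod (rho k)) + rho k * e"
      unfolding ck ipkk by (simp add: distrib_left cnj_sgn mult.assoc[symmetric])
    then have "Re (rho k * c k) = cmod (rho k) + Re (rho k * e)" by simp
    moreover have "- Re (rho k * e) \<le> cmod (rho k) * ?I"
    proof -
      have "- Re (rho k * e) \<le> cmod (rho k * e)"
        using complex_Re_le_cmod[of "- (rho k * e)"] by simp
      also have "\<dots> \<le> cmod (rho k) * ?I" using eI by (simp add: norm_mult mult_left_mono)
      finally show ?thesis .
    qed
    ultimately show ?thesis by (simp add: algebra_simps)
  qed
  have Bsum: "?B = (\<Sum>k\<in>S. cmod (rho k))"
    unfolding l1norm_def by (rule sum.mono_neutral_right) (use S_sub rho_supp finS in auto)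
  have TS: "T rho = (\<Sum>k\<in>S. rho k * c k)"
    unfolding Tlin by (rule sum.mono_neutral_right) (use S_sub rho_supp finS in auto)
  have low: "Re (T rho) \<ge> (1 - ?I) * ?B"
  proof -
    have "(1 - ?I) * ?B = (\<Sum>k\<in>S. (1 - ?I) * cmod (rho k))" unfolding Bsum by (simp add: sum_distrib_left)
    also have "\<dots> \<le> (\<Sum>k\<in>S. Re (rho k * c k))" by (rule sum_mono) (rule lowk)
    also have "\<dots> = Re (T rho)" unfolding TS by (simp add: Re_sum)
    finally show ?thesis .
  qed
  have AB: "?A \<le> ?B" using rhos_min by blast
  have outA: "?out \<le> ?A"
    unfolding l1norm_def by (rule sum_mono) simp
  have key: "(1 - ?I) * ?B \<le> (1 + ?I) * ?A - r * ?out"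
  proof -
    have "Re (T rho) \<le> cmod (T rhos)" using Teq complex_Re_le_cmod[of "T rhos"] by simp
    then show ?thesis using low up by linarith
  qed
  show ?thesis
  proof (cases "?I < 1")
    case True
    have "(1 - ?I) * ?A \<le> (1 - ?I) * ?B" using AB True by (simp add: mult_left_mono)
    then have "r * ?out \<le> 2 * ?I * ?A" using key by (simp add: algebra_simps)
    then show ?thesis using r_range by (simp add: field_simps)
  next
    case False
    have A0: "0 \<le> ?A" unfolding l1norm_def by (simp add: sum_nonneg)
    have "1 \<le> 2 * ?I / r" using False r_range by (simp add: field_simps)
    then have "?A \<le> 2 * ?I / r * ?A" using A0 mult_right_mono[of 1 "2 * ?I / r" ?A] by simp
    then show ?thesis using outA by linarith
  qed
qed

end
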